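(* Under the standing setup, if $s_1=\dots=s_n=\tfrac12$, then the Nash equilibrium of the zero-sum game in which Georgia chooses $g\in[0,\underline s]$ to minimize $f$ and Hank chooses $h\in[\overline s,1]$ to maximize $f$ is $(g^*,h^* )=(0,1)$.
   Context: Standing setup. Fix $n\in\mathbb N$ and $W=[w_{ij}]\in\mathbb R^{n\times n}$ with $w_{ij}\ge0$, $w_{ii}=0$. Let $\|W\|_\infty=\max_i\sum_j|w_{ij}|$, $\|W\|_1=\max_j\sum_i|w_{ij}|$, let $\lambda$ be the spectral radius of $W$, and assume there is $c\in\mathbb R^n$ with all entries positive and $W^\top c=\lambda c$. Fix $\beta\ge\gamma\ge0$ with $1-\max\{\|W\|_\infty,\|W\|_1\}>\max\{2\beta,4\gamma\}$. Fix $s\in[0,1]^n$, $\overline s=\max_is_i$, $\underline s=\min_is_i$. Set $\widehat c_i=c_i/\sum_jc_j$, $\widehat s=\sum_i\widehat c_is_i$, $\chi=\sum_i\widehat c_is_i\sum_jw_{ij}$. Define $$f(g,h)=\frac{(1-2\beta+(h-g)\gamma)\widehat s-\chi+(h+g)\beta+(g^2-h^2)\gamma}{1-\lambda+(g-h)\gamma}\,c^\top\mathbf 1$$ (the centrality-weighted steady state of the opinion dynamics with source opinions $g,h$). *)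

theory Defs
  imports "Jordan_Normal_Form.Spectral_Radius"
begin

definition norm_inf_mat :: "real mat \<Rightarrow> real" where
  "norm_inf_mat W = (MAX i\<in>{..<dim_row W}. \<Sum>j<dim_col W. \<bar>W $$ (i,j)\<bar>)"

definition norm_one_mat :: "real mat \<Rightarrow> real" where
  "norm_one_mat W = (MAX j\<in>{..<dim_col W}. \<Sum>i<dim_row W. \<bar>W $$ (i,j)\<bar>)"

definition real_spectral_radius :: "real mat \<Rightarrow> real" where
  "real_spectral_radius W = spectral_radius (map_mat complex_of_real W)"

definition opinion_f ::
  "real mat \<Rightarrow> real vec \<Rightarrow> real \<Rightarrow> real \<Rightarrow> real vec \<Rightarrow> real \<Rightarrow> real \<Rightarrow> real" where
  "opinion_f W c \<beta> \<gamma> s g h =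
    (let n = dim_row W;
         lam = real_spectral_radius W;
         C = (\<Sum>j<n. c $ j);
         ch = (\<lambda>i. c $ i / C);
         shat = (\<Sum>i<n. ch i * s $ i);
         chi = (\<Sum>i<n. ch i * s $ i * (\<Sum>j<n. W $$ (i,j)))
     in ((1 - 2*\<beta> + (h - g)*\<gamma>) * shat - chi + (h + g)*\<beta> + (g^2 - h^2)*\<gamma>)
        / (1 - lam + (g - h)*\<gamma>) * C)"

definition zero_sum_nash :: "real set \<Rightarrow> real set \<Rightarrow> (real \<Rightarrow> real \<Rightarrow> real) \<Rightarrow> real \<Rightarrow> real \<Rightarrow> bool" where
  "zero_sum_nash G H F g h \<longleftrightarrow> g \<in> G \<and> h \<in> H \<and>
     (\<forall>g'\<in>G. F g h \<le> F g' h) \<and> (\<forall>h'\<in>H. F g h' \<le> F g h)"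

end

theory Submission
  imports Defs
begin

theorem corollary3:
  fixes n :: nat and W :: "real mat" and c s :: "real vec" and \<beta> \<gamma> :: real
  assumes n_pos: "n > 0"
    and W_dim: "W \<in> carrier_mat n n"
    and W_nonneg: "\<forall>i<n. \<forall>j<n. W $$ (i,j) \<ge> 0"
    and W_diag: "\<forall>i<n. W $$ (i,i) = 0"
    and c_dim: "c \<in> carrier_vec n"
    and c_pos: "\<forall>i<n. c $ i > 0"
    and c_eig: "transpose_mat W *\<^sub>v c = real_spectral_radius W \<cdot>\<^sub>v c"
    and beta_gamma: "\<beta> \<ge> \<gamma>" "\<gamma> \<ge> 0"
    and norm_cond: "1 - max (norm_inf_mat W) (norm_one_mat W) > max (2*\<beta>) (4*\<gamma>)"
    and s_dim: "s \<in> carrier_vec n"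
    and s_range: "\<forall>i<n. 0 \<le> s $ i \<and> s $ i \<le> 1"
    and s_half: "\<forall>i<n. s $ i = 1/2"
  shows "zero_sum_nash
           {0 .. (MIN i\<in>{..<n}. s $ i)} {(MAX i\<in>{..<n}. s $ i) .. 1}
           (\<lambda>g h. opinion_f W c \<beta> \<gamma> s g h) 0 1"
proof -
  define L where "L = real_spectral_radius W"
  define C where "C = (\<Sum>j<n. c $ j)"
  define r where "r = (\<lambda>i. \<Sum>j<n. W $$ (i,j))"
  have dr: "dim_row W = n" and dc: "dim_col W = n" using W_dim by auto
  have Cpos: "C > 0" unfolding C_def using c_pos n_pos
    by (intro sum_pos) auto
  have eigj: "(\<Sum>i<n. W $$ (i,j) * c $ i) = L * c $ j" if "j < n" for j
  proof -
    have "(transpose_mat W *\<^sub>v c) $ j = (L \<cdot>\<^sub>v c) $ j" using c_eig L_def by simp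
    moreover have "(transpose_mat W *\<^sub>v c) $ j = (\<Sum>i<n. W $$ (i,j) * c $ i)"
      using that dr dc c_dim
      by (simp add: scalar_prod_def lessThan_atLeast0 mult.commute)
    moreover have "(L \<cdot>\<^sub>v c) $ j = L * c $ j" using that c_dim by simp
    ultimately show ?thesis by simp
  qed
  have hsum: "(\<Sum>i<n. c $ i * r i) = L * C"
  proof -
    have "(\<Sum>i<n. c $ i * r i) = (\<Sum>j<n. \<Sum>i<n. W $$ (i,j) * c $ i)"
      unfolding r_def sum_distrib_left by (subst sum.swap) (simp add: mult.commute)
    also have "\<dots> = (\<Sum>j<n. L * c $ j)" using eigj by simp
    finally show ?thesis by (simp add: C_def sum_distrib_left)
  qed
  have rle: "r i \<le> norm_inf_mat W" if "i < n" for i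
  proof -
    have "r i = (\<Sum>j<n. \<bar>W $$ (i,j)\<bar>)" unfolding r_def using W_nonneg that by simp
    also have "\<dots> \<le> norm_inf_mat W" unfolding norm_inf_mat_def dr dc
      using that by (intro Max_ge) auto
    finally show ?thesis .
  qed
  have "L * C \<le> norm_inf_mat W * C"
  proof -
    have "(\<Sum>i<n. c $ i * r i) \<le> (\<Sum>i<n. c $ i * norm_inf_mat W)"
      using rle c_pos by (intro sum_mono mult_left_mono) (auto intro: less_imp_le)
    thus ?thesis using hsum by (simp add: C_def sum_distrib_left mult.commute)
  qed
  hence Lle: "L \<le> norm_inf_mat W" using Cpos by simp
  have Lb: "L < 1 - 4*\<gamma>" using Lle norm_cond by linarith
  have shat: "(\<Sum>i<n. c $ i / C * s $ i) = 1/2"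
  proof -
    have "(\<Sum>i<n. c $ i / C * s $ i) = (\<Sum>i<n. c $ i) / (2*C)"
      unfolding sum_divide_distrib by (intro sum.cong) (auto simp: s_half[rule_format])
    thus ?thesis using Cpos by (simp add: C_def)
  qed
  have chi: "(\<Sum>i<n. c $ i / C * s $ i * (\<Sum>j<n. W $$ (i,j))) = L/2"
  proof -
    have "(\<Sum>i<n. c $ i / C * s $ i * (\<Sum>j<n. W $$ (i,j))) = (\<Sum>i<n. c $ i * r i) / (2*C)"
      unfolding sum_divide_distrib r_def by (intro sum.cong) (auto simp: s_half[rule_format])
    thus ?thesis using hsum Cpos by simp
  qed
  have F: "opinion_f W c \<beta> \<gamma> s g h = C/2 + (h+g-1)*(\<beta>-(h-g)*\<gamma>)/(1-L-(h-g)*\<gamma>) * C"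
    if "1-L-(h-g)*\<gamma> > 0" for g h
  proof -
    have "opinion_f W c \<beta> \<gamma> s g h =
      ((1 - 2*\<beta> + (h - g)*\<gamma>) * (1/2) - L/2 + (h + g)*\<beta> + (g^2 - h^2)*\<gamma>)
        / (1 - L + (g - h)*\<gamma>) * C"
      unfolding opinion_f_def Let_def dr C_def[symmetric] L_def[symmetric] shat chi by (rule refl)
    also have "\<dots> = C/2 + (h+g-1)*(\<beta>-(h-g)*\<gamma>)/(1-L-(h-g)*\<gamma>) * C"
      using that by (simp add: field_simps power2_eq_square)
    finally show ?thesis .
  qed
  have mn: "(MIN i\<in>{..<n}. s $ i) = 1/2"
  proof -
    have "(\<lambda>i. s $ i) ` {..<n} = {1/2}" using s_half n_pos by auto
    thus ?thesis by simp
  qed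
  have mx: "(MAX i\<in>{..<n}. s $ i) = 1/2"
  proof -
    have "(\<lambda>i. s $ i) ` {..<n} = {1/2}" using s_half n_pos by auto
    thus ?thesis by simp
  qed
  have f01: "opinion_f W c \<beta> \<gamma> s 0 1 = C/2" using F[where g=0 and h=1] Lb beta_gamma by simp
  show ?thesis unfolding zero_sum_nash_def mn mx
  proof (intro conjI ballI)
    show "(0::real) \<in> {0..1/2}" "(1::real) \<in> {1/2..1}" by auto
  next
    fix g' :: real assume g: "g' \<in> {0..1/2}"
    have m: "(1-g')*\<gamma> \<le> 1*\<gamma>" using g beta_gamma by (intro mult_right_mono) auto
    have d: "1-L-(1-g')*\<gamma> > 0" using m Lb beta_gamma by linarith
    have "(1+g'-1)*(\<beta>-(1-g')*\<gamma>) \<ge> 0" using g beta_gamma m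
      by (intro mult_nonneg_nonneg) auto
    hence "(1+g'-1)*(\<beta>-(1-g')*\<gamma>)/(1-L-(1-g')*\<gamma>) * C \<ge> 0" using d Cpos by simp
    thus "opinion_f W c \<beta> \<gamma> s 0 1 \<le> opinion_f W c \<beta> \<gamma> s g' 1"
      using F[OF d] f01 by simp
  next
    fix h' :: real assume h: "h' \<in> {1/2..1}"
    have m: "h'*\<gamma> \<le> 1*\<gamma>" using h beta_gamma by (intro mult_right_mono) auto
    have d: "1-L-(h'-0)*\<gamma> > 0" using m Lb beta_gamma by simp
    have "(h'+0-1)*(\<beta>-(h'-0)*\<gamma>) \<le> 0" using h beta_gamma m
      by (intro mult_nonpos_nonneg) auto
    hence "(h'+0-1)*(\<beta>-(h'-0)*\<gamma>)/(1-L-(h'-0)*\<gamma>) * C \<le> 0" using d Cpos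
      by (simp add: divide_nonpos_pos mult_nonpos_nonneg)
    thus "opinion_f W c \<beta> \<gamma> s 0 h' \<le> opinion_f W c \<beta> \<gamma> s 0 1"
      using F[OF d] f01 by simp
  qed
qed

end
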